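(* Let $n\ge3$, $k\ge1$ be integers, $\alpha=n/2-1$, and let $b>0>c$ be real numbers satisfying $$bc=-\frac{(k+1)k(\alpha+k-1)}{(2\alpha+k)(2\alpha+k-1)(\alpha+k+1)},\qquad b+c=-\frac{2\alpha(k+1)^2(\alpha+k-1)}{(2\alpha+k)(2\alpha+k-1)(\alpha+2k+1)}.$$ Then $$q_{k+1}(t):=P_{k+1}^{(n)}(t)+bP_{k-1}^{(n)}(t)=\frac{(\alpha)_{k+1}2^{k+1}}{(2\alpha)_{k+1}}(t-\beta_1)\cdots(t-\beta_{k+1}),$$ where $\beta_1,\dots,\beta_{k+1}$ are distinct, lie in $(-1,1)$, and the set $\{\beta_1,\dots,\beta_{k+1}\}$ is symmetric about the origin.
   Context: $P_i^{(n)}$ is the Gegenbauer polynomial of degree $i$, i.e. the Jacobi polynomial with parameters $(n-3)/2,(n-3)/2$ normalized so that $P_i^{(n)}(1)=1$ ($P_0^{(n)}=1$). $(x)_m=x(x+1)\cdots(x+m-1)$ is the Pochhammer symbol. *)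

theory Defs
  imports "HOL-Computational_Algebra.Polynomial"
begin

text \<open>Gegenbauer polynomial P_i^{(n)} of degree i, i.e. the Jacobi polynomial with
  parameters ((n-3)/2,(n-3)/2) normalized so that P_i^{(n)}(1) = 1.  Defined by the
  standard three-term recurrence for this normalization (alpha = n/2 - 1):
  (i + n - 2) P_{i+1}(t) = (2i + n - 2) t P_i(t) - i P_{i-1}(t),  P_0 = 1, P_1 = t.\<close>
fun gegenbauer :: "nat \<Rightarrow> nat \<Rightarrow> real poly" where
  "gegenbauer n 0 = 1"
| "gegenbauer n (Suc 0) = [:0, 1:]"
| "gegenbauer n (Suc (Suc i)) =
     smult (1 / (real (Suc i) + real n - 2))
       (smult (2 * real (Suc i) + real n - 2) ([:0, 1:] * gegenbauer n (Suc i))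
        - smult (real (Suc i)) (gegenbauer n i))"

end

theory Submission
  imports Defs
begin

lemma geg_rec:
  assumes "m \<ge> 1" "n \<ge> 3"
  shows "gegenbauer n (Suc m) =
    smult ((2 * real m + real n - 2) / (real m + real n - 2)) ([:0,1:] * gegenbauer n m)
    - smult (real m / (real m + real n - 2)) (gegenbauer n (m - 1))"
proof -
  obtain i where m: "m = Suc i" using assms(1) by (cases m) auto
  show ?thesis unfolding m by (simp add: smult_diff_right divide_inverse mult.commute)
qed

lemma deg_comb_le: "degree (smult a X - smult c Y) \<le> max (degree X) (degree (Y::real poly))"
  by (metis degree_diff_le_max degree_smult_le max.mono order_trans)

lemma geg_deg: "degree (gegenbauer n m) \<le> m"
proof (induction n m rule: gegenbauer.induct)
  case (3 n i)
  have "degree ([:0,1:] * gegenbauer n (Suc i)) \<le> Suc (Suc i)"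
    by (rule order.trans[OF degree_mult_le]) (use 3 in simp)
  moreover have "degree (gegenbauer n i) \<le> Suc (Suc i)" using 3 by simp
  ultimately show ?case
    by (simp only: gegenbauer.simps) (rule order.trans[OF degree_smult_le], rule order.trans[OF deg_comb_le], simp)
qed auto

lemma geg_parity: "poly (gegenbauer n m) (- t) = (-1)^m * poly (gegenbauer n m) t"
  by (induction n m rule: gegenbauer.induct) (auto simp: algebra_simps)

lemma geg_one: assumes "n \<ge> 3" shows "poly (gegenbauer n m) 1 = 1"
  using assms
proof (induction n m rule: gegenbauer.induct)
  case (3 n i)
  then show ?case by (simp add: field_simps)
qed auto


lemma factor_roots:
  fixes p :: "real poly"
  assumes "degree p = m" "inj_on x {..<m}" "\<forall>i<m. poly p (x i) = 0"
  shows "p = smult (lead_coeff p) (\<Prod>i<m. [:- x i, 1:])"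
  using assms
proof (induction m arbitrary: p)
  case 0
  then obtain c where "p = [:c:]" by (auto elim!: degree_eq_zeroE)
  then show ?case by simp
next
  case (Suc m)
  have "[:- x m, 1:] dvd p" using Suc.prems(3) by (simp add: dvd_iff_poly_eq_0)
  then obtain q where pq: "p = [:- x m, 1:] * q" by (auto elim: dvdE)
  have p0: "p \<noteq> 0" using Suc.prems(1) by auto
  hence q0: "q \<noteq> 0" using pq by auto
  have dq: "degree q = m" proof -
    have "degree ([:- x m, 1:] * q) = degree [:- x m, 1:] + degree q" using q0 by (intro degree_mult_eq) auto
    hence "degree p = 1 + degree q" using pq by simp
    then show ?thesis using Suc.prems(1) by simp
  qed
  have "\<forall>i<m. poly q (x i) = 0"
  proof (intro allI impI)
    fix i assume i: "i < m"
    have "x i \<noteq> x m" using Suc.prems(2) i by (auto simp: inj_on_def)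
    moreover have "poly p (x i) = 0" using Suc.prems(3) i by simp
    ultimately show "poly q (x i) = 0" using pq by simp
  qed
  moreover have "inj_on x {..<m}" using Suc.prems(2) by (auto simp: inj_on_def)
  ultimately have qf: "q = smult (lead_coeff q) (\<Prod>i<m. [:- x i, 1:])" using Suc.IH dq by blast
  have "lead_coeff p = lead_coeff [:- x m, 1:] * lead_coeff q" by (simp only: pq lead_coeff_mult)
  hence "lead_coeff p = lead_coeff q" by simp
  then show ?case using pq qf
    by (metis (no_types, lifting) lessThan_Suc mult.commute mult_smult_right prod.insert finite_lessThan lessThan_iff less_irrefl)
qed

lemma deg_prod_lin: "degree (\<Prod>i<m. [:- (x i), 1::real:]) = m"
  by (subst degree_prod_eq_sum_degree) auto

lemma lead_prod_lin: "lead_coeff (\<Prod>i<m. [:- (x i), 1::real:]) = 1"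
  by (simp add: lead_coeff_prod)


lemma sign_prod:
  fixes z :: real
  assumes mono: "\<forall>i j. i < j \<longrightarrow> j < m \<longrightarrow> x i < x j"
    and j: "j \<le> m" and lo: "0 < j \<Longrightarrow> x (j - 1) < z" and hi: "j < m \<Longrightarrow> z < x j"
  shows "(-1)^(m - j) * (\<Prod>i<m. z - x i) > 0"
proof -
  have split: "{..<m} = {..<j} \<union> {j..<m}" using j by auto
  have P1: "(\<Prod>i<j. z - x i) > 0"
  proof (rule prod_pos)
    fix i assume "i \<in> {..<j}"
    hence i: "i < j" by simp
    have "i = j - 1 \<or> (i < j - 1 \<and> j - 1 < m)" using i j by auto
    hence "x i \<le> x (j - 1)" using mono by (metis order.refl less_imp_le)
    then show "z - x i > 0" using lo i by simp
  qed
  have "(\<Prod>i\<in>{j..<m}. z - x i) = (\<Prod>i\<in>{j..<m}. (-1) * (x i - z))" by simp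
  also have "\<dots> = (-1)^(m - j) * (\<Prod>i\<in>{j..<m}. x i - z)" by (simp only: prod.distrib) simp
  finally have e: "(\<Prod>i\<in>{j..<m}. z - x i) = (-1)^(m - j) * (\<Prod>i\<in>{j..<m}. x i - z)" .
  have P2: "(\<Prod>i\<in>{j..<m}. x i - z) > 0"
  proof (rule prod_pos)
    fix i assume "i \<in> {j..<m}"
    hence i: "j \<le> i" "i < m" by auto
    hence "i = j \<or> j < i" by auto
    hence "x j \<le> x i" using mono i by (metis order.refl less_imp_le)
    then show "x i - z > 0" using hi i by simp
  qed
  have "(\<Prod>i<m. z - x i) = (\<Prod>i<j. z - x i) * (\<Prod>i\<in>{j..<m}. z - x i)"
    unfolding split by (rule prod.union_disjoint) auto
  hence "(-1)^(m - j) * (\<Prod>i<m. z - x i) = ((-1)^(m-j) * (-1)^(m - j)) * ((\<Prod>i<j. z - x i) * (\<Prod>i\<in>{j..<m}. x i - z))"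
    using e by (simp add: algebra_simps)
  also have "(-1)^(m-j) * (-1)^(m - j) = (1::real)" by (simp flip: power_add)
  finally show ?thesis using P1 P2 by simp
qed


lemma neg1_pow_sq: "(-1::real)^j * (-1)^j = 1"
  by (simp flip: power_add)

lemma step_lemma:
  fixes p r s :: "real poly" and x :: "nat \<Rightarrow> real"
  assumes m1: "m \<ge> 1"
    and hp: "p = smult L (\<Prod>i<m. [:- x i, 1:])" and L: "L > 0"
    and mono: "\<forall>i j. i < j \<longrightarrow> j < m \<longrightarrow> x i < x j"
    and rng: "\<forall>i<m. -1 < x i \<and> x i < 1"
    and sgn: "\<forall>i<m. (-1)^(m - 1 - i) * poly r (x i) > 0"
    and dr: "degree r \<le> m"
    and A: "A > 0" and C: "C > 0"
    and hs: "s = smult A ([:0,1:] * p) - smult C r"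
    and s1: "poly s 1 > 0" and sm1: "(-1)^(m+1) * poly s (-1) > 0"
  shows "\<exists>z. s = smult (A * L) (\<Prod>i<m+1. [:- z i, 1:])
           \<and> (\<forall>i j. i < j \<longrightarrow> j < m + 1 \<longrightarrow> z i < z j)
           \<and> (\<forall>i<m+1. -1 < z i \<and> z i < 1)
           \<and> (\<forall>i<m+1. (-1)^(m - i) * poly p (z i) > 0)"
proof -
  define w where "w j = (if j = 0 then -1 else if j \<le> m then x (j - 1) else 1)" for j
  have px0: "poly p (x i) = 0" if "i < m" for i
    using that unfolding hp by (auto simp: poly_prod prod_zero_iff)
  have wsgn: "(-1)^(m + 1 - j) * poly s (w j) > 0" if jle: "j \<le> m + 1" for j
  proof -
    consider "j = 0" | "1 \<le> j" "j \<le> m" | "j = m + 1" using jle by linarith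
    then show ?thesis
    proof cases
      case 1 then show ?thesis using sm1 by (simp add: w_def)
    next
      case 2
      have "poly s (w j) = - C * poly r (x (j - 1))"
        using 2 px0[of "j - 1"] by (simp add: w_def hs)
      moreover have "(-1::real)^(m + 1 - j) = - ((-1)^(m - 1 - (j - 1)))"
      proof -
        have "m + 1 - j = Suc (m - 1 - (j - 1))" using 2 by simp
        then show ?thesis by simp
      qed
      moreover have "(-1)^(m - 1 - (j - 1)) * poly r (x (j - 1)) > 0" using sgn[rule_format, of "j - 1"] 2 by simp
      ultimately show ?thesis using C by (simp add: mult_pos_pos mult.left_commute[of _ C])
    next
      case 3 then show ?thesis using s1 by (simp add: w_def)
    qed
  qed
  have wstep: "w j < w (Suc j)" if jle: "j \<le> m" for j
  proof -
    consider "j = 0" | "1 \<le> j" "j < m" | "j = m" using jle by linarith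
    then show ?thesis
    proof cases
      case 1 then show ?thesis using rng m1 by (simp add: w_def)
    next
      case 2 then show ?thesis using mono by (simp add: w_def)
    next
      case 3 then show ?thesis using rng m1 by (simp add: w_def)
    qed
  qed
  have wmono: "w i \<le> w j" if "i \<le> j" "j \<le> m + 1" for i j
    using that
  proof (induction j)
    case 0 then show ?case by simp
  next
    case (Suc j)
    show ?case
    proof (cases "i = Suc j")
      case False
      hence "w i \<le> w j" using Suc by simp
      also have "w j < w (Suc j)" using wstep Suc.prems by simp
      finally show ?thesis by simp
    qed simp
  qed
  have "\<forall>j\<in>{..m}. \<exists>z. w j < z \<and> z < w (Suc j) \<and> poly s z = 0"
  proof
    fix j assume "j \<in> {..m}"
    hence j: "j \<le> m" by simp
    have a: "(-1)^(m + 1 - j) * poly s (w j) > 0" using wsgn j by simp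
    have b: "(-1)^(m + 1 - Suc j) * poly s (w (Suc j)) > 0" using wsgn[of "Suc j"] j by simp
    have e: "(-1::real)^(m + 1 - j) = - ((-1)^(m + 1 - Suc j))"
    proof -
      have "m + 1 - j = Suc (m + 1 - Suc j)" using j by simp
      then show ?thesis by simp
    qed
    have "((-1)^(m + 1 - j) * poly s (w j)) * ((-1)^(m + 1 - Suc j) * poly s (w (Suc j))) > 0"
      using a b by simp
    hence "- (((-1::real)^(m + 1 - Suc j) * (-1)^(m + 1 - Suc j)) * (poly s (w j) * poly s (w (Suc j)))) > 0"
      unfolding e by (simp add: algebra_simps)
    hence "poly s (w j) * poly s (w (Suc j)) < 0" by (simp only: neg1_pow_sq)
    then show "\<exists>z. w j < z \<and> z < w (Suc j) \<and> poly s z = 0"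
      using poly_IVT[OF wstep[OF j]] by blast
  qed
  then obtain z where z: "\<And>j. j \<le> m \<Longrightarrow> w j < z j \<and> z j < w (Suc j) \<and> poly s (z j) = 0"
    by (metis atMost_iff bchoice)
  have zmono: "\<forall>i j. i < j \<longrightarrow> j < m + 1 \<longrightarrow> z i < z j"
  proof (intro allI impI)
    fix i j assume ij: "i < j" "j < m + 1"
    have "z i < w (Suc i)" using z ij by simp
    also have "w (Suc i) \<le> w j" using wmono ij by simp
    also have "w j < z j" using z ij by simp
    finally show "z i < z j" .
  qed
  have zrng: "\<forall>i<m+1. -1 < z i \<and> z i < 1"
  proof (intro allI impI)
    fix i assume i: "i < m + 1"
    have "-1 = w 0" by (simp add: w_def)
    also have "w 0 \<le> w i" using wmono i by simp
    also have "w i < z i" using z i by simp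
    finally have 1: "-1 < z i" .
    have "z i < w (Suc i)" using z i by simp
    also have "w (Suc i) \<le> w (m + 1)" using wmono i by simp
    also have "w (m + 1) = 1" by (simp add: w_def)
    finally show "-1 < z i \<and> z i < 1" using 1 by simp
  qed
  have zsgn: "\<forall>i<m+1. (-1)^(m - i) * poly p (z i) > 0"
  proof (intro allI impI)
    fix j assume j: "j < m + 1"
    have lo: "x (j - 1) < z j" if "0 < j"
      using z[of j] j that by (simp add: w_def)
    have hi: "z j < x j" if "j < m"
      using z[of j] j that by (simp add: w_def)
    have "(-1)^(m - j) * (\<Prod>i<m. z j - x i) > 0"
      using sign_prod[OF mono _ lo hi] j by simp
    moreover have "poly p (z j) = L * (\<Prod>i<m. z j - x i)"
      unfolding hp by (simp add: poly_prod)
    ultimately show "(-1)^(m - j) * poly p (z j) > 0" using L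
      by (metis mult.left_commute mult_pos_pos)
  qed
  have dp: "degree p = m" using L unfolding hp by (simp add: deg_prod_lin)
  have lp: "lead_coeff p = L" unfolding hp by (simp add: lead_prod_lin)
  have cs: "coeff s (m + 1) = A * L"
    using dr lp dp by (simp add: hs coeff_eq_0)
  have "degree s \<le> m + 1"
    unfolding hs
  proof (rule order.trans[OF deg_comb_le])
    have "degree ([:0,1:] * p) \<le> m + 1"
      using degree_mult_le[of "[:0,1:]" p] dp by simp
    then show "max (degree ([:0, 1:] * p)) (degree r) \<le> m + 1" using dr by simp
  qed
  moreover have "coeff s (m + 1) \<noteq> 0" using cs A L by simp
  ultimately have ds: "degree s = m + 1" by (meson le_antisym le_degree)
  have ls: "lead_coeff s = A * L" using ds cs by simp
  have "inj_on z {..<m+1}"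
    by (rule inj_onI) (metis lessThan_iff linorder_neqE_nat zmono less_irrefl)
  moreover have "\<forall>i<m+1. poly s (z i) = 0" using z by simp
  ultimately have "s = smult (lead_coeff s) (\<Prod>i<m+1. [:- z i, 1:])"
    using factor_roots ds by blast
  then show ?thesis using zmono zrng zsgn ls by metis
qed


lemma Lc_pos:
  assumes "n \<ge> 3"
  shows "pochhammer (real n / 2 - 1) m * 2 ^ m / pochhammer (2 * (real n / 2 - 1)) m > 0"
proof -
  have "real n / 2 - 1 > 0" "2 * (real n / 2 - 1) > 0" using assms by auto
  then show ?thesis by (simp add: pochhammer_pos)
qed

lemma Lc_aux: "(Q::real) \<noteq> 0 \<Longrightarrow> D \<noteq> 0 \<Longrightarrow> A = 2 * B \<Longrightarrow> A / D * (P * T / Q) = P * B * (2 * T) / (Q * D)"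
  by (simp add: field_simps)

lemma Lc_Suc:
  assumes "n \<ge> 3"
  shows "(2 * real m + real n - 2) / (real m + real n - 2) *
    (pochhammer (real n / 2 - 1) m * 2 ^ m / pochhammer (2 * (real n / 2 - 1)) m)
    = pochhammer (real n / 2 - 1) (Suc m) * 2 ^ (Suc m) / pochhammer (2 * (real n / 2 - 1)) (Suc m)"
proof -
  have Q: "pochhammer (2 * (real n / 2 - 1)) m \<noteq> 0"
  proof -
    have "pochhammer (2 * (real n / 2 - 1)) m > 0" using assms by (intro pochhammer_pos) auto
    then show ?thesis by simp
  qed
  have eq: "real m + real n - 2 = 2 * (real n / 2 - 1) + real m" by simp
  have D: "2 * (real n / 2 - 1) + real m \<noteq> 0" using assms by simp
  have AB: "2 * real m + real n - 2 = 2 * (real n / 2 - 1 + real m)" by simp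
  show ?thesis unfolding pochhammer_Suc power_Suc eq
    by (rule Lc_aux[OF Q D AB])
qed

lemma geg_roots:
  assumes n: "n \<ge> 3" and m: "m \<ge> 1"
  shows "\<exists>x. gegenbauer n m = smult (pochhammer (real n / 2 - 1) m * 2 ^ m / pochhammer (2 * (real n / 2 - 1)) m) (\<Prod>i<m. [:- x i, 1:])
    \<and> (\<forall>i j. i < j \<longrightarrow> j < m \<longrightarrow> x i < x j)
    \<and> (\<forall>i<m. -1 < x i \<and> x i < 1)
    \<and> (\<forall>i<m. (-1)^(m - 1 - i) * poly (gegenbauer n (m - 1)) (x i) > 0)"
  using m
proof (induction m rule: nat_induct_at_least)
  case base
  have "pochhammer (real n / 2 - 1) 1 * 2 ^ 1 / pochhammer (2 * (real n / 2 - 1)) 1 = 1"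
    using n by simp
  then show ?case by (intro exI[of _ "\<lambda>_. 0"]) simp
next
  case (Suc m)
  then obtain x where x: "gegenbauer n m = smult (pochhammer (real n / 2 - 1) m * 2 ^ m / pochhammer (2 * (real n / 2 - 1)) m) (\<Prod>i<m. [:- x i, 1:])"
    "\<forall>i j. i < j \<longrightarrow> j < m \<longrightarrow> x i < x j" "\<forall>i<m. -1 < x i \<and> x i < 1"
    "\<forall>i<m. (-1)^(m - 1 - i) * poly (gegenbauer n (m - 1)) (x i) > 0" by blast
  have dr: "degree (gegenbauer n (m - 1)) \<le> m" using geg_deg[of n "m - 1"] by simp
  have A: "(2 * real m + real n - 2) / (real m + real n - 2) > 0" using n by auto
  have C: "real m / (real m + real n - 2) > 0" using n Suc by auto
  have s1: "poly (gegenbauer n (Suc m)) 1 > 0" using geg_one[OF n] by simp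
  have sm1: "(-1)^(m+1) * poly (gegenbauer n (Suc m)) (-1) > 0"
    using geg_parity[of n "Suc m" 1] geg_one[OF n, of "Suc m"] by (simp flip: power_add)
  from step_lemma[OF Suc(1) x(1) Lc_pos[OF n] x(2) x(3) x(4) dr A C geg_rec[OF Suc(1) n] s1 sm1]
  show ?case unfolding Lc_Suc[OF n] by simp
qed

lemma fK_eq:
  fixes a k :: real
  assumes a: "a > 0" and k: "k \<ge> 1"
  shows "(k/(k+2*a))^2 - (- (2 * a * (k + 1)^2 * (a + k - 1)) /
                 ((2 * a + k) * (2 * a + k - 1) * (a + 2 * k + 1))) * (k/(k+2*a))
        + (- ((k + 1) * k * (a + k - 1)) / ((2 * a + k) * (2 * a + k - 1) * (a + k + 1)))
      = k * (4*a*k^3 + 2*a*k^4 + 8*a^2*k^2 + 4*a^2*k^3 + 4*a^3*k + 2*a^3*k^2) /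
        ((k+2*a)^2 * (2*a+k-1) * (a+2*k+1) * (a+k+1))"
proof -
  define d1 d2 d3 d4 where "d1 = 2*a+k" and "d2 = 2*a+k-1" and "d3 = a+2*k+1" and "d4 = a+k+1"
  have nz: "d1 \<noteq> 0" "d2 \<noteq> 0" "d3 \<noteq> 0" "d4 \<noteq> 0" using a k by (auto simp: d1_def d2_def d3_def d4_def)
  have e1: "k + 2*a = d1" by (simp add: d1_def)
  have "(k/d1)^2 - (- (2 * a * (k + 1)^2 * (a + k - 1)) / (d1 * d2 * d3)) * (k/d1)
        + (- ((k + 1) * k * (a + k - 1)) / (d1 * d2 * d4))
      = k * (4*a*k^3 + 2*a*k^4 + 8*a^2*k^2 + 4*a^2*k^3 + 4*a^3*k + 2*a^3*k^2) /
        (d1^2 * d2 * d3 * d4)"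
    using nz apply (simp add: field_simps power2_eq_square)
    unfolding d1_def d2_def d3_def d4_def by algebra
  then show ?thesis unfolding e1 by (simp add: d1_def d2_def d3_def d4_def)
qed

lemma b_lt:
  fixes a k b c :: real
  assumes a: "a > 0" and k: "k \<ge> 1" and c: "c < 0"
    and bc: "b * c = - ((k + 1) * k * (a + k - 1)) / ((2 * a + k) * (2 * a + k - 1) * (a + k + 1))"
    and bpc: "b + c = - (2 * a * (k + 1)^2 * (a + k - 1)) /
                 ((2 * a + k) * (2 * a + k - 1) * (a + 2 * k + 1))"
  shows "b < k / (k + 2*a)"
proof -
  define K where "K = k / (k + 2*a)"
  have Kp: "K > 0" using a k by (simp add: K_def)
  have "(K - b) * (K - c) = K^2 - (b + c) * K + b * c" by (simp add: algebra_simps power2_eq_square)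
  also have "\<dots> > 0" unfolding bc bpc K_def fK_eq[OF a k]
    using a k by (intro divide_pos_pos mult_pos_pos add_pos_pos) auto
  finally have "(K - b) * (K - c) > 0" .
  moreover have "K - c > 0" using Kp c by simp
  ultimately have "K - b > 0" using zero_less_mult_pos2 by blast
  then show ?thesis by (simp add: K_def)
qed

lemma poly_smult_prod_lin: "poly (smult (L::real) (\<Prod>j\<in>A. [:- z j, 1:])) t = L * (\<Prod>j\<in>A. t - z j)"
  unfolding poly_smult poly_prod by (intro arg_cong[where f="(*) L"] prod.cong) (auto simp: algebra_simps)

theorem lemma4p11:
  fixes n k :: nat and b c :: real
  defines "\<alpha> \<equiv> real n / 2 - 1"
  assumes "n \<ge> 3" and "k \<ge> 1"
    and "b > 0" and "c < 0"
    and "b * c = - ((real k + 1) * real k * (\<alpha> + real k - 1)) /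
                 ((2 * \<alpha> + real k) * (2 * \<alpha> + real k - 1) * (\<alpha> + real k + 1))"
    and "b + c = - (2 * \<alpha> * (real k + 1)^2 * (\<alpha> + real k - 1)) /
                 ((2 * \<alpha> + real k) * (2 * \<alpha> + real k - 1) * (\<alpha> + 2 * real k + 1))"
  shows "\<exists>\<beta> :: nat \<Rightarrow> real.
           gegenbauer n (k + 1) + smult b (gegenbauer n (k - 1)) =
             smult (pochhammer \<alpha> (k + 1) * 2 ^ (k + 1) / pochhammer (2 * \<alpha>) (k + 1))
               (\<Prod>i<k + 1. [:- \<beta> i, 1:])
           \<and> inj_on \<beta> {..<k + 1}
           \<and> (\<forall>i<k + 1. -1 < \<beta> i \<and> \<beta> i < 1)
           \<and> (\<forall>i<k + 1. \<exists>j<k + 1. \<beta> j = - \<beta> i)"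
proof -
  note n = assms(2) and k = assms(3)
  have apos: "\<alpha> > 0" using n by (simp add: \<alpha>_def)
  have bK: "b < real k / (real k + 2 * \<alpha>)"
    using b_lt[OF apos _ assms(5) assms(6) assms(7)] k by simp
  obtain x where x: "gegenbauer n k = smult (pochhammer (real n / 2 - 1) k * 2 ^ k / pochhammer (2 * (real n / 2 - 1)) k) (\<Prod>i<k. [:- x i, 1:])"
    "\<forall>i j. i < j \<longrightarrow> j < k \<longrightarrow> x i < x j" "\<forall>i<k. -1 < x i \<and> x i < 1"
    "\<forall>i<k. (-1)^(k - 1 - i) * poly (gegenbauer n (k - 1)) (x i) > 0"
    using geg_roots[OF n k] by blast
  define q where "q = gegenbauer n (k + 1) + smult b (gegenbauer n (k - 1))"
  define A where "A = (2 * real k + real n - 2) / (real k + real n - 2)"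
  define C where "C = real k / (real k + real n - 2) - b"
  have dr: "degree (gegenbauer n (k - 1)) \<le> k" using geg_deg[of n "k - 1"] by simp
  have A: "A > 0" using n by (auto simp: A_def)
  have e: "real k / (real k + real n - 2) = real k / (real k + 2 * \<alpha>)" by (simp add: \<alpha>_def algebra_simps)
  have C: "C > 0" using bK unfolding C_def e by simp
  have hs: "q = smult A ([:0,1:] * gegenbauer n k) - smult C (gegenbauer n (k - 1))"
    unfolding q_def A_def C_def using geg_rec[OF k n] by (simp add: smult_diff_left algebra_simps)
  have s1: "poly q 1 > 0" using geg_one[OF n] assms(4) by (simp add: q_def)
  have "(-1)^(k+1) * poly q (-1) = (-1)^(k+1) * (-1)^(k+1) + b * ((-1)^(k+1) * (-1)^(k-1))"
    using geg_parity[of n "k + 1" 1] geg_parity[of n "k - 1" 1] geg_one[OF n]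
    by (simp add: q_def algebra_simps)
  also have "(-1::real)^(k+1) * (-1)^(k-1) = 1"
  proof -
    have "(k + 1) + (k - 1) = 2 * k" using k by simp
    then show ?thesis by (simp flip: power_add)
  qed
  finally have sm1: "(-1)^(k+1) * poly q (-1) > 0" using assms(4) by (simp flip: power_add)
  obtain z where z: "q = smult (A * (pochhammer (real n / 2 - 1) k * 2 ^ k / pochhammer (2 * (real n / 2 - 1)) k)) (\<Prod>i<k+1. [:- z i, 1:])"
    "\<forall>i j. i < j \<longrightarrow> j < k + 1 \<longrightarrow> z i < z j" "\<forall>i<k+1. -1 < z i \<and> z i < 1"
    using step_lemma[OF k x(1) Lc_pos[OF n] x(2) x(3) x(4) dr A C hs s1 sm1] by blast
  have L: "A * (pochhammer (real n / 2 - 1) k * 2 ^ k / pochhammer (2 * (real n / 2 - 1)) k)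
      = pochhammer \<alpha> (k + 1) * 2 ^ (k + 1) / pochhammer (2 * \<alpha>) (k + 1)"
    using Lc_Suc[OF n, of k] by (simp add: A_def \<alpha>_def)
  have Lpos: "pochhammer \<alpha> (k + 1) * 2 ^ (k + 1) / pochhammer (2 * \<alpha>) (k + 1) > 0"
    using Lc_pos[OF n, of "k+1"] by (simp add: \<alpha>_def)
  have qz: "q = smult (pochhammer \<alpha> (k + 1) * 2 ^ (k + 1) / pochhammer (2 * \<alpha>) (k + 1)) (\<Prod>i<k+1. [:- z i, 1:])"
    using z(1) L by simp
  have inj: "inj_on z {..<k+1}"
    by (rule inj_onI) (metis lessThan_iff linorder_neqE_nat z(2) less_irrefl)
  have par: "poly q (- t) = (-1)^(k+1) * poly q t" for t
  proof -
    have "(-1::real)^(k-1) = (-1)^(k+1)"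
    proof -
      obtain j where "k = Suc j" using k by (cases k) auto
      then show ?thesis by simp
    qed
    then show ?thesis using geg_parity[of n "k + 1" t] geg_parity[of n "k - 1" t]
      by (simp add: q_def algebra_simps)
  qed
  have sym: "\<forall>i<k + 1. \<exists>j<k + 1. z j = - z i"
  proof (intro allI impI)
    fix i assume i: "i < k + 1"
    have "(\<Prod>j<k+1. z i - z j) = 0" using i by (intro prod_zero) auto
    moreover have "poly q (z i) = (pochhammer \<alpha> (k + 1) * 2 ^ (k + 1) / pochhammer (2 * \<alpha>) (k + 1)) * (\<Prod>j<k+1. z i - z j)"
      unfolding qz by (rule poly_smult_prod_lin)
    ultimately have "poly q (z i) = 0" by simp
    hence "poly q (- z i) = 0" using par by simp
    moreover have "poly q (- z i) = (pochhammer \<alpha> (k + 1) * 2 ^ (k + 1) / pochhammer (2 * \<alpha>) (k + 1)) * (\<Prod>j<k+1. - z i - z j)"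
      unfolding qz by (rule poly_smult_prod_lin)
    ultimately have "(\<Prod>j<k+1. - z i - z j) = 0" using Lpos by (metis mult_eq_0_iff less_irrefl)
    hence "\<exists>j\<in>{..<k+1}. - z i - z j = 0" by (simp only: prod_zero_iff[OF finite_lessThan])
    then obtain j where "j \<in> {..<k+1}" "- z i - z j = 0" by blast
    then show "\<exists>j<k + 1. z j = - z i" by (intro exI[of _ j]) simp
  qed
  show ?thesis using qz inj z(3) sym unfolding q_def by blast
qed

end
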